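(* Let $\sigma_{CF2}$ be CF2 semantics. For every two argumentation frameworks $AF=(AR,Attacks)$ and $AF'=(AR',Attacks')$ with $AF\preceq_N AF'$: $$\forall E\in\sigma_{CF2}(AF)\ \exists E'\in\sigma_{CF2}(AF') \text{ such that } (E'\not\subseteq AR\ \lor\ E'=E).$$
   Context: An argumentation framework is a pair $AF=(AR,Attacks)$ with $AR$ a finite set and $Attacks\subseteq AR\times AR$; $a$ attacks $b$ iff $(a,b)\in Attacks$; a set $S$ attacks $b$ iff some element of $S$ attacks $b$. $AF\preceq_N AF'$ (normal expansion) iff $AR\subseteq AR'$, $Attacks\subseteq Attacks'$ and no $(a,b)\in Attacks'\setminus Attacks$ has $a,b\in AR$. $S$ is conflict-free iff no element of $S$ attacks an element of $S$; a naive extension is a $\subseteq$-maximal conflict-free set. Attack sequence: $\langle a_1,\dots,a_n\rangle$ of pairwise distinct arguments with $(a_i,a_{i+1})\in Attacks$; $b$ is reachable from $a$ iff such a sequence has $a_1=a,a_n=b$. SCCs: maximal sets of mutually reachable arguments; $SCCS_{AF}$ is the set of them. $AF\downarrow_S=(S,Attacks\cap(S\times S))$. For an SCC $S$ and $E\subseteq AR$: $S^-_{out}=\{a\notin S: a\text{ attacks some element of }S\}$; $D_{AF}(S,E)=\{a\in S: E\cap S^-_{out}\text{ attacks }a\}$; $P_{AF}(S,E)=\{a\in S: E\cap S^-_{out}\text{ does not attack }a\text{ and }\exists b\in S^-_{out}\text{ attacking }a\text{ such that }E\text{ does not attack }b\}$; $UP_{AF}(S,E)=S\setminus D_{AF}(S,E)$.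 CF2: $E\subseteq AR$ is a CF2 extension of $AF$ iff either $|SCCS_{AF}|=1$ and $E$ is a naive extension of $AF$, or $|SCCS_{AF}|>1$ and for every $S\in SCCS_{AF}$, $E\cap S$ is a CF2 extension of $AF\downarrow_{UP_{AF}(S,E)}$. $\sigma_{CF2}(AF)$ is the set of all CF2 extensions. *)

theory Defs
  imports Main
begin

definition is_AF :: "'a set \<Rightarrow> ('a \<times> 'a) set \<Rightarrow> bool" where
  "is_AF AR Att \<longleftrightarrow> finite AR \<and> Att \<subseteq> AR \<times> AR"

definition normal_expansion ::
  "'a set \<Rightarrow> ('a \<times> 'a) set \<Rightarrow> 'a set \<Rightarrow> ('a \<times> 'a) set \<Rightarrow> bool" where
  "normal_expansion AR Att AR' Att' \<longleftrightarrow>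
     AR \<subseteq> AR' \<and> Att \<subseteq> Att' \<and>
     (\<forall>(a, b) \<in> Att' - Att. \<not> (a \<in> AR \<and> b \<in> AR))"

definition set_attacks :: "('a \<times> 'a) set \<Rightarrow> 'a set \<Rightarrow> 'a \<Rightarrow> bool" where
  "set_attacks Att S b \<longleftrightarrow> (\<exists>a \<in> S. (a, b) \<in> Att)"

definition conflict_free :: "('a \<times> 'a) set \<Rightarrow> 'a set \<Rightarrow> bool" where
  "conflict_free Att S \<longleftrightarrow> (\<forall>a \<in> S. \<forall>b \<in> S. (a, b) \<notin> Att)"

definition naive_ext :: "'a set \<Rightarrow> ('a \<times> 'a) set \<Rightarrow> 'a set \<Rightarrow> bool" where
  "naive_ext AR Att E \<longleftrightarrow> E \<subseteq> AR \<and> conflict_free Att E \<and>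
     (\<forall>T. E \<subseteq> T \<and> T \<subseteq> AR \<and> conflict_free Att T \<longrightarrow> T = E)"

definition attack_seq :: "'a set \<Rightarrow> ('a \<times> 'a) set \<Rightarrow> 'a list \<Rightarrow> bool" where
  "attack_seq AR Att xs \<longleftrightarrow> xs \<noteq> [] \<and> distinct xs \<and> set xs \<subseteq> AR \<and>
     (\<forall>i. Suc i < length xs \<longrightarrow> (xs ! i, xs ! Suc i) \<in> Att)"

definition reachable :: "'a set \<Rightarrow> ('a \<times> 'a) set \<Rightarrow> 'a \<Rightarrow> 'a \<Rightarrow> bool" where
  "reachable AR Att a b \<longleftrightarrow>
     (\<exists>xs. attack_seq AR Att xs \<and> hd xs = a \<and> last xs = b)"

definition mutually_reachable :: "'a set \<Rightarrow> ('a \<times> 'a) set \<Rightarrow> 'a set \<Rightarrow> bool" where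
  "mutually_reachable AR Att S \<longleftrightarrow> (\<forall>a \<in> S. \<forall>b \<in> S. reachable AR Att a b)"

definition SCCS :: "'a set \<Rightarrow> ('a \<times> 'a) set \<Rightarrow> 'a set set" where
  "SCCS AR Att = {S. S \<noteq> {} \<and> S \<subseteq> AR \<and> mutually_reachable AR Att S \<and>
     (\<forall>T. S \<subseteq> T \<and> T \<subseteq> AR \<and> mutually_reachable AR Att T \<longrightarrow> T = S)}"

definition restrict_att :: "('a \<times> 'a) set \<Rightarrow> 'a set \<Rightarrow> ('a \<times> 'a) set" where
  "restrict_att Att S = Att \<inter> (S \<times> S)"

definition S_out_minus :: "'a set \<Rightarrow> ('a \<times> 'a) set \<Rightarrow> 'a set \<Rightarrow> 'a set" where
  "S_out_minus AR Att S = {a \<in> AR. a \<notin> S \<and> (\<exists>b \<in> S. (a, b) \<in> Att)}"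

definition D_set :: "'a set \<Rightarrow> ('a \<times> 'a) set \<Rightarrow> 'a set \<Rightarrow> 'a set \<Rightarrow> 'a set" where
  "D_set AR Att S E = {a \<in> S. set_attacks Att (E \<inter> S_out_minus AR Att S) a}"

definition P_set :: "'a set \<Rightarrow> ('a \<times> 'a) set \<Rightarrow> 'a set \<Rightarrow> 'a set \<Rightarrow> 'a set" where
  "P_set AR Att S E = {a \<in> S. \<not> set_attacks Att (E \<inter> S_out_minus AR Att S) a \<and>
     (\<exists>b \<in> S_out_minus AR Att S. (b, a) \<in> Att \<and> \<not> set_attacks Att E b)}"

definition UP_set :: "'a set \<Rightarrow> ('a \<times> 'a) set \<Rightarrow> 'a set \<Rightarrow> 'a set \<Rightarrow> 'a set" where
  "UP_set AR Att S E = S - D_set AR Att S E"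

text \<open>CF2 extensions, defined (well-founded) recursively on the framework.
  Convention: a framework with at most one SCC (including the empty framework)
  is the base case.\<close>
inductive cf2_ext :: "'a set \<Rightarrow> ('a \<times> 'a) set \<Rightarrow> 'a set \<Rightarrow> bool" where
  base: "card (SCCS AR Att) \<le> 1 \<Longrightarrow> naive_ext AR Att E \<Longrightarrow> cf2_ext AR Att E"
| step: "card (SCCS AR Att) > 1 \<Longrightarrow> E \<subseteq> AR \<Longrightarrow>
         (\<And>S. S \<in> SCCS AR Att \<Longrightarrow>
            cf2_ext (UP_set AR Att S E) (restrict_att Att (UP_set AR Att S E)) (E \<inter> S)) \<Longrightarrow>
         cf2_ext AR Att E"

end

theory Submission
  imports Defs "HOL-Library.Transitive_Closure_Table"
begin

definition cls :: "'a set \<Rightarrow> ('a \<times> 'a) set \<Rightarrow> 'a \<Rightarrow> 'a set" where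
  "cls A R a = {b \<in> A. (a, b) \<in> R\<^sup>* \<and> (b, a) \<in> R\<^sup>*}"

definition Dd :: "('a \<times> 'a) set \<Rightarrow> 'a set \<Rightarrow> 'a set \<Rightarrow> 'a set" where
  "Dd R S E = {y \<in> S. \<exists>e \<in> E. e \<notin> S \<and> (e, y) \<in> R}"

definition cnd :: "('a \<times> 'a) set \<Rightarrow> 'a set \<Rightarrow> 'a set \<Rightarrow> bool" where
  "cnd R X E = cf2_ext (X - Dd R X E) (restrict_att R (X - Dd R X E)) (E \<inter> X)"

lemma rt_in: "(a, b) \<in> R\<^sup>* \<Longrightarrow> R \<subseteq> A \<times> A \<Longrightarrow> a \<in> A \<Longrightarrow> b \<in> A"
  by (induction rule: rtrancl_induct) auto

lemma path_rt: "(\<forall>i. Suc i < length xs \<longrightarrow> (xs ! i, xs ! Suc i) \<in> R) \<Longrightarrow> xs \<noteq> [] \<Longrightarrow>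
   (hd xs, last xs) \<in> R\<^sup>*"
proof (induction xs)
  case Nil then show ?case by simp
next
  case (Cons x ys)
  show ?case
  proof (cases ys)
    case Nil then show ?thesis by simp
  next
    case (Cons y zs)
    have "(x, y) \<in> R" using Cons.prems(1)[rule_format, of 0] Cons by simp
    moreover have "(hd ys, last ys) \<in> R\<^sup>*"
      apply (rule Cons.IH)
       apply (intro allI impI)
      subgoal for i using Cons.prems(1)[rule_format, of "Suc i"] by simp
      using Cons by simp
    ultimately show ?thesis using Cons by simp
  qed
qed

lemma rpath_seq: "rtrancl_path r x xs y \<Longrightarrow>
  (\<forall>i. Suc i < length (x # xs) \<longrightarrow> r ((x # xs) ! i) ((x # xs) ! Suc i)) \<and> last (x # xs) = y"
proof (induction rule: rtrancl_path.induct)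
  case (base x) then show ?case by simp
next
  case (step x y ys z)
  show ?case
  proof (intro conjI allI impI)
    fix i assume "Suc i < length (x # y # ys)"
    then show "r ((x # y # ys) ! i) ((x # y # ys) ! Suc i)"
      using step by (cases i) auto
  next
    show "last (x # y # ys) = z" using step by simp
  qed
qed

lemma rpath_set: "rtrancl_path r x xs y \<Longrightarrow> (\<And>a b. r a b \<Longrightarrow> b \<in> A) \<Longrightarrow> set xs \<subseteq> A"
  by (induction rule: rtrancl_path.induct) auto

lemma reach_iff:
  assumes "R \<subseteq> A \<times> A"
  shows "reachable A R a b \<longleftrightarrow> a \<in> A \<and> (a, b) \<in> R\<^sup>*"
proof
  assume "reachable A R a b"
  then obtain xs where xs: "attack_seq A R xs" "hd xs = a" "last xs = b"
    unfolding reachable_def by blast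
  then have "(a, b) \<in> R\<^sup>*" using path_rt[of xs R] unfolding attack_seq_def by auto
  moreover have "a \<in> A" using xs unfolding attack_seq_def by (metis hd_in_set subsetD)
  ultimately show "a \<in> A \<and> (a, b) \<in> R\<^sup>*" by simp
next
  assume h: "a \<in> A \<and> (a, b) \<in> R\<^sup>*"
  then have "(\<lambda>x y. (x, y) \<in> R)\<^sup>*\<^sup>* a b" by (simp add: rtranclp_rtrancl_eq)
  then obtain xs where "rtrancl_path (\<lambda>x y. (x, y) \<in> R) a xs b"
    using rtranclp_eq_rtrancl_path by metis
  then obtain xs' where p: "rtrancl_path (\<lambda>x y. (x, y) \<in> R) a xs' b" "distinct (a # xs')"
    by (rule rtrancl_path_distinct)
  have "set xs' \<subseteq> A" using rpath_set[OF p(1), of A] assms by auto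
  then have "attack_seq A R (a # xs')" using rpath_seq[OF p(1)] p(2) h
    unfolding attack_seq_def by auto
  then show "reachable A R a b" unfolding reachable_def using rpath_seq[OF p(1)]
    by (metis list.sel(1))
qed

lemma cls_self: "a \<in> A \<Longrightarrow> a \<in> cls A R a"
  unfolding cls_def by auto

lemma cls_sub: "cls A R a \<subseteq> A"
  unfolding cls_def by auto

lemma cls_eq: "b \<in> cls A R a \<Longrightarrow> cls A R b = cls A R a"
  unfolding cls_def by (auto intro: rtrancl_trans)

lemma SCCS_eq:
  assumes "R \<subseteq> A \<times> A"
  shows "SCCS A R = cls A R ` A"
proof -
  have mr: "mutually_reachable A R T \<longleftrightarrow> (\<forall>a\<in>T. \<forall>b\<in>T. (a, b) \<in> R\<^sup>*)" if "T \<subseteq> A" for T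
    using that unfolding mutually_reachable_def reach_iff[OF assms] by blast
  have mc: "mutually_reachable A R (cls A R a)" for a
    by (subst mr[OF cls_sub]) (auto simp: cls_def intro: rtrancl_trans)
  show ?thesis
  proof
    show "SCCS A R \<subseteq> cls A R ` A"
    proof
      fix S assume S: "S \<in> SCCS A R"
      then obtain a where a: "a \<in> S" unfolding SCCS_def by auto
      have SA: "S \<subseteq> A" using S unfolding SCCS_def by auto
      have "mutually_reachable A R S" using S unfolding SCCS_def by auto
      then have "S \<subseteq> cls A R a" using a SA mr[OF SA] unfolding cls_def by auto
      moreover have "\<forall>T. S \<subseteq> T \<and> T \<subseteq> A \<and> mutually_reachable A R T \<longrightarrow> T = S"
        using S unfolding SCCS_def by blast
      ultimately have "cls A R a = S" using cls_sub[of A R a] mc[of a] by blast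
      then show "S \<in> cls A R ` A" using a SA by auto
    qed
  next
    show "cls A R ` A \<subseteq> SCCS A R"
    proof
      fix S assume "S \<in> cls A R ` A"
      then obtain a where a: "a \<in> A" "S = cls A R a" by auto
      have "T = S" if "S \<subseteq> T" "T \<subseteq> A" "mutually_reachable A R T" for T
      proof -
        have "a \<in> T" using that a cls_self[OF a(1)] by auto
        then have "T \<subseteq> S" using that mr[OF that(2)] a unfolding cls_def by auto
        then show ?thesis using that by auto
      qed
      moreover have "S \<noteq> {}" "S \<subseteq> A" "mutually_reachable A R S"
        using a mc cls_self[of a A R] cls_sub[of A R a] by auto
      ultimately show "S \<in> SCCS A R" unfolding SCCS_def by blast
    qed
  qed
qed

lemma UP_eq:
  assumes "R \<subseteq> A \<times> A"
  shows "UP_set A R S E = S - Dd R S E"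
  using assms unfolding UP_set_def D_set_def Dd_def set_attacks_def S_out_minus_def by blast

lemma cf2_sub: "cf2_ext A R E \<Longrightarrow> E \<subseteq> A"
  by (induction rule: cf2_ext.induct) (auto simp: naive_ext_def)

lemma restrict_restrict: "Y \<subseteq> X \<Longrightarrow> restrict_att (restrict_att R X) Y = restrict_att R Y"
  unfolding restrict_att_def by auto

lemma restrict_wf: "restrict_att R X \<subseteq> X \<times> X"
  unfolding restrict_att_def by auto

lemma restrict_all: "R \<subseteq> A \<times> A \<Longrightarrow> restrict_att R A = R"
  unfolding restrict_att_def by auto

lemma U_lemma:
  assumes fin: "finite A" and wf: "R \<subseteq> A \<times> A"
  shows "cf2_ext A R E \<longleftrightarrow> E \<subseteq> A \<and> (\<forall>a\<in>A. cnd R (cls A R a) E)"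
proof (cases "card (SCCS A R) > 1")
  case True
  show ?thesis
  proof
    assume "cf2_ext A R E"
    then show "E \<subseteq> A \<and> (\<forall>a\<in>A. cnd R (cls A R a) E)"
    proof cases
      case base then show ?thesis using True by simp
    next
      case step
      have "cnd R (cls A R a) E" if "a \<in> A" for a
      proof -
        have "cls A R a \<in> SCCS A R" using SCCS_eq[OF wf] that by auto
        then show ?thesis using step(3) unfolding cnd_def UP_eq[OF wf] by simp
      qed
      then show ?thesis using step(2) by blast
    qed
  next
    assume h: "E \<subseteq> A \<and> (\<forall>a\<in>A. cnd R (cls A R a) E)"
    show "cf2_ext A R E"
    proof (rule cf2_ext.step[OF True])
      show "E \<subseteq> A" using h by simp
      fix S assume "S \<in> SCCS A R"
      then obtain a where "a \<in> A" "S = cls A R a" using SCCS_eq[OF wf] by auto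
      then show "cf2_ext (UP_set A R S E) (restrict_att R (UP_set A R S E)) (E \<inter> S)"
        using h unfolding cnd_def UP_eq[OF wf] by simp
    qed
  qed
next
  case False
  then have c1: "card (SCCS A R) \<le> 1" by simp
  show ?thesis
  proof (cases "A = {}")
    case True
    then have "R = {}" using wf by auto
    have "cf2_ext A R {}"
      by (rule cf2_ext.base[OF c1]) (simp add: naive_ext_def conflict_free_def True)
    moreover have "cf2_ext A R E \<Longrightarrow> E = {}" using cf2_sub[of A R E] True by blast
    ultimately show ?thesis using True
      by (metis empty_iff subset_empty)
  next
    case False
    then obtain a0 where a0: "a0 \<in> A" by auto
    have fin2: "finite (SCCS A R)" using SCCS_eq[OF wf] fin by simp
    have "\<forall>S1\<in>SCCS A R. \<forall>S2\<in>SCCS A R. S1 = S2"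
      using c1 card_le_Suc0_iff_eq[OF fin2] by simp
    then have ceq: "\<forall>a\<in>A. cls A R a = cls A R a0"
      using a0 SCCS_eq[OF wf] by blast
    have cA: "\<forall>a\<in>A. cls A R a = A"
    proof
      fix a assume "a \<in> A"
      have "A \<subseteq> cls A R a0"
      proof
        fix b assume "b \<in> A"
        then have "b \<in> cls A R b" by (rule cls_self)
        then show "b \<in> cls A R a0" using ceq \<open>b \<in> A\<close> by simp
      qed
      then have "cls A R a0 = A" using cls_sub[of A R a0] by (rule subset_antisym[rotated])
      then show "cls A R a = A" using ceq \<open>a \<in> A\<close> by simp
    qed
    have DdA: "Dd R A E = {}" using wf unfolding Dd_def by auto
    have cc: "cnd R A E \<longleftrightarrow> cf2_ext A R (E \<inter> A)"
      unfolding cnd_def DdA using restrict_all[OF wf] by simp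
    show ?thesis
    proof
      assume h: "cf2_ext A R E"
      then have "E \<subseteq> A" by (rule cf2_sub)
      then have "E \<inter> A = E" by blast
      then show "E \<subseteq> A \<and> (\<forall>a\<in>A. cnd R (cls A R a) E)" using cA cc h \<open>E \<subseteq> A\<close> by simp
    next
      assume h: "E \<subseteq> A \<and> (\<forall>a\<in>A. cnd R (cls A R a) E)"
      then have "E \<inter> A = E" by blast
      then show "cf2_ext A R E" using h cA cc a0 by auto
    qed
  qed
qed


lemma KC:
  assumes SB: "S \<subseteq> B" and dis: "E \<inter> B \<inter> Dd R B E = {}"
  shows "cnd (restrict_att R (B - Dd R B E)) (S - Dd R B E) (E \<inter> B) \<longleftrightarrow> cnd R S E"
proof -
  let ?D = "Dd R B E"
  let ?G = "restrict_att R (B - ?D)"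
  have X: "(S - ?D) - Dd ?G (S - ?D) (E \<inter> B) = S - Dd R S E"
  proof
    show "S - ?D - Dd ?G (S - ?D) (E \<inter> B) \<subseteq> S - Dd R S E"
    proof
      fix y assume y: "y \<in> S - ?D - Dd ?G (S - ?D) (E \<inter> B)"
      have "y \<notin> Dd R S E"
      proof
        assume "y \<in> Dd R S E"
        then obtain e where e: "e \<in> E" "e \<notin> S" "(e, y) \<in> R" unfolding Dd_def by blast
        show False
        proof (cases "e \<in> B")
          case True
          then have "e \<notin> ?D" using dis e by blast
          then have "(e, y) \<in> ?G" using e y True SB unfolding restrict_att_def by auto
          then have "y \<in> Dd ?G (S - ?D) (E \<inter> B)" using y e True unfolding Dd_def by auto
          then show False using y by blast
        next
          case False
          then have "y \<in> ?D" using y e SB unfolding Dd_def by auto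
          then show False using y by blast
        qed
      qed
      then show "y \<in> S - Dd R S E" using y by blast
    qed
  next
    show "S - Dd R S E \<subseteq> S - ?D - Dd ?G (S - ?D) (E \<inter> B)"
    proof
      fix y assume y: "y \<in> S - Dd R S E"
      have "y \<notin> ?D" using y SB unfolding Dd_def by auto
      moreover have "y \<notin> Dd ?G (S - ?D) (E \<inter> B)"
        using y unfolding Dd_def restrict_att_def by auto
      ultimately show "y \<in> S - ?D - Dd ?G (S - ?D) (E \<inter> B)" using y by blast
    qed
  qed
  have sub: "S - Dd R S E \<subseteq> B - ?D"
    using SB unfolding Dd_def by auto
  have EE: "E \<inter> B \<inter> (S - ?D) = E \<inter> S" using SB dis by blast
  show ?thesis unfolding cnd_def X EE restrict_restrict[OF sub] ..
qed

lemma P_lemma: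
  "card A = n \<Longrightarrow> finite A \<Longrightarrow> R \<subseteq> A \<times> A \<Longrightarrow> E \<subseteq> A \<Longrightarrow> \<Union>BB = A \<Longrightarrow>
   (\<forall>B\<in>BB. \<forall>a\<in>B. cls A R a \<subseteq> B) \<Longrightarrow> cf2_ext A R E \<longleftrightarrow> (\<forall>B\<in>BB. cnd R B E)"
proof (induction n arbitrary: A R E BB rule: less_induct)
  case (less n)
  note fin = less.prems(2) and wf = less.prems(3) and EA = less.prems(4)
  have side: "E \<inter> B \<inter> Dd R B E = {}"
    if fine: "\<forall>a\<in>A. cnd R (cls A R a) E" and BA: "B \<subseteq> A" and cl: "\<forall>a\<in>B. cls A R a \<subseteq> B" for B
  proof (rule ccontr)
    assume "E \<inter> B \<inter> Dd R B E \<noteq> {}"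
    then obtain y where y: "y \<in> E" "y \<in> B" "y \<in> Dd R B E" by blast
    then obtain e where e: "e \<in> E" "e \<notin> B" "(e, y) \<in> R" unfolding Dd_def by blast
    have yc: "y \<in> cls A R y" using y BA by (intro cls_self) blast
    have "e \<notin> cls A R y" using cl y e by blast
    then have yD: "y \<in> Dd R (cls A R y) E" using yc e unfolding Dd_def by blast
    have "cnd R (cls A R y) E" using fine y BA by blast
    then have "E \<inter> cls A R y \<subseteq> cls A R y - Dd R (cls A R y) E"
      unfolding cnd_def by (rule cf2_sub)
    then show False using yD yc y by blast
  qed
  have star: "cnd R B E \<longleftrightarrow> (E \<inter> B \<inter> Dd R B E = {} \<and> (\<forall>a\<in>B. cnd R (cls A R a) E))"
    if BA: "B \<subseteq> A" and cl: "\<forall>a\<in>B. cls A R a \<subseteq> B" for B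
  proof (cases "B = A")
    case True
    have DdA: "Dd R A E = {}" using wf unfolding Dd_def by auto
    have "cnd R A E \<longleftrightarrow> cf2_ext A R E"
      unfolding cnd_def DdA using restrict_all[OF wf] EA by (simp add: Int_absorb2)
    then show ?thesis using U_lemma[OF fin wf] True DdA EA by simp
  next
    case False
    let ?D = "Dd R B E"
    let ?B' = "B - ?D"
    let ?G = "restrict_att R ?B'"
    let ?BB = "(\<lambda>a. cls A R a - ?D) ` B"
    have "card B < card A" using False BA fin by (intro psubset_card_mono) auto
    moreover have "card ?B' \<le> card B" using fin BA by (intro card_mono) (auto intro: finite_subset)
    ultimately have lt: "card ?B' < n" using less.prems(1) by linarith
    have finB: "finite ?B'" using fin BA by (meson Diff_subset finite_subset)
    have cov: "\<Union>?BB = ?B'"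
    proof
      show "\<Union>?BB \<subseteq> ?B'"
      proof
        fix y assume "y \<in> \<Union>?BB"
        then obtain a where a: "a \<in> B" "y \<in> cls A R a - ?D" by (auto simp del: Diff_iff)
        have "cls A R a \<subseteq> B" using cl a(1) by (rule bspec)
        then show "y \<in> ?B'" using a(2) by (rule Diff_mono[OF _ subset_refl, THEN subsetD])
      qed
      show "?B' \<subseteq> \<Union>?BB"
      proof
        fix y assume y: "y \<in> ?B'"
        have yA: "y \<in> A" using y BA by (meson DiffD1 subsetD)
        have "y \<in> cls A R y" using yA by (rule cls_self)
        then have "y \<in> cls A R y - ?D" using y by (meson DiffD2 DiffI)
        moreover have "cls A R y - ?D \<in> ?BB" using y by (meson DiffD1 imageI)
        ultimately show "y \<in> \<Union>?BB" by (rule UnionI[rotated])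
      qed
    qed
    have mono: "?G\<^sup>* \<subseteq> R\<^sup>*" by (rule rtrancl_mono) (auto simp: restrict_att_def)
    have clG: "\<forall>C\<in>?BB. \<forall>c\<in>C. cls ?B' ?G c \<subseteq> C"
    proof (intro ballI)
      fix C c assume C: "C \<in> ?BB" and c: "c \<in> C"
      from C obtain a where a: "a \<in> B" "C = cls A R a - ?D" by (rule imageE)
      have "c \<in> cls A R a" using c a(2) by simp
      then have ceq: "cls A R c = cls A R a" by (rule cls_eq)
      show "cls ?B' ?G c \<subseteq> C"
      proof
        fix b assume b: "b \<in> cls ?B' ?G c"
        have bB: "b \<in> ?B'" using cls_sub[of ?B' ?G c] b by (rule subsetD)
        have "(c, b) \<in> R\<^sup>*" "(b, c) \<in> R\<^sup>*" using b mono unfolding cls_def by auto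
        moreover have "b \<in> A" using bB BA by (meson DiffD1 subsetD)
        ultimately have "b \<in> cls A R c" unfolding cls_def by simp
        then show "b \<in> C" using ceq a(2) bB by simp
      qed
    qed
    have IH: "cf2_ext ?B' ?G (E \<inter> B) \<longleftrightarrow> (\<forall>C\<in>?BB. cnd ?G C (E \<inter> B))"
      if "E \<inter> B \<subseteq> ?B'"
      by (rule less.IH[OF lt refl finB restrict_wf that cov clG])
    have kc: "(\<forall>C\<in>?BB. cnd ?G C (E \<inter> B)) \<longleftrightarrow> (\<forall>a\<in>B. cnd R (cls A R a) E)"
      if "E \<inter> B \<inter> ?D = {}"
      using KC[OF _ that] cl by auto
    show ?thesis
    proof
      assume h: "cnd R B E"
      then have "E \<inter> B \<subseteq> ?B'" unfolding cnd_def by (rule cf2_sub)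
      then have d: "E \<inter> B \<inter> ?D = {}" by blast
      show "E \<inter> B \<inter> ?D = {} \<and> (\<forall>a\<in>B. cnd R (cls A R a) E)"
        using h IH[OF \<open>E \<inter> B \<subseteq> ?B'\<close>] kc[OF d] d unfolding cnd_def by simp
    next
      assume h: "E \<inter> B \<inter> ?D = {} \<and> (\<forall>a\<in>B. cnd R (cls A R a) E)"
      then have "E \<inter> B \<subseteq> ?B'" by blast
      then show "cnd R B E" using h IH[OF \<open>E \<inter> B \<subseteq> ?B'\<close>] kc unfolding cnd_def by simp
    qed
  qed
  have BsA: "B \<subseteq> A" if "B \<in> BB" for B using that less.prems(5) by blast
  show ?case
  proof
    assume "cf2_ext A R E"
    then have fine: "\<forall>a\<in>A. cnd R (cls A R a) E" using U_lemma[OF fin wf] by blast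
    show "\<forall>B\<in>BB. cnd R B E"
    proof
      fix B assume B: "B \<in> BB"
      have cl: "\<forall>a\<in>B. cls A R a \<subseteq> B" using B less.prems(6) by blast
      show "cnd R B E" using star[OF BsA[OF B] cl] side[OF fine BsA[OF B] cl] fine BsA[OF B] by blast
    qed
  next
    assume h: "\<forall>B\<in>BB. cnd R B E"
    have "\<forall>a\<in>A. cnd R (cls A R a) E"
    proof
      fix a assume "a \<in> A"
      then obtain B where B: "B \<in> BB" "a \<in> B" using less.prems(5) by blast
      have cl: "\<forall>a\<in>B. cls A R a \<subseteq> B" using B less.prems(6) by blast
      show "cnd R (cls A R a) E" using star[OF BsA[OF B(1)] cl] h B by blast
    qed
    then show "cf2_ext A R E" using U_lemma[OF fin wf] EA by blast
  qed
qed


definition att :: "('a \<times> 'a) set \<Rightarrow> 'a set \<Rightarrow> 'a set" where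
  "att R X = {y. \<exists>e\<in>X. (e, y) \<in> R}"

lemma split_iff:
  assumes fin: "finite A" and wf: "R \<subseteq> A \<times> A" and EA: "E \<subseteq> A" and UA: "U \<subseteq> A"
    and unatt: "\<forall>a\<in>A. \<forall>b\<in>U. (a, b) \<in> R \<longrightarrow> a \<in> U"
    and cl: "\<forall>a\<in>U. cls A R a \<subseteq> U"
  shows "cf2_ext A R E \<longleftrightarrow> cf2_ext U (restrict_att R U) (E \<inter> U) \<and>
     cf2_ext (A - U - att R (E \<inter> U)) (restrict_att R (A - U - att R (E \<inter> U))) (E - U)"
proof -
  have cl2: "\<forall>a\<in>A - U. cls A R a \<subseteq> A - U"
  proof (intro ballI subsetI)
    fix a b assume a: "a \<in> A - U" and b: "b \<in> cls A R a"
    have bA: "b \<in> A" using cls_sub[of A R a] b by (rule subsetD)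
    show "b \<in> A - U"
    proof (rule ccontr)
      assume "b \<notin> A - U"
      then have "b \<in> U" using bA by simp
      moreover have "cls A R b = cls A R a" using b by (rule cls_eq)
      moreover have "a \<in> cls A R a" using a by (intro cls_self) simp
      ultimately show False using cl a by blast
    qed
  qed
  have cov: "\<Union>{U, A - U} = A" using UA by blast
  have clB: "\<forall>B\<in>{U, A - U}. \<forall>a\<in>B. cls A R a \<subseteq> B" using cl cl2 by blast
  have P: "cf2_ext A R E \<longleftrightarrow> cnd R U E \<and> cnd R (A - U) E"
    using P_lemma[OF refl fin wf EA cov clB] by simp
  have D1: "Dd R U E = {}" using unatt wf unfolding Dd_def by blast
  have D2: "A - U - Dd R (A - U) E = A - U - att R (E \<inter> U)"
    using EA unfolding Dd_def att_def by blast
  have E2: "E \<inter> (A - U) = E - U" using EA by blast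
  show ?thesis using P unfolding cnd_def D1 D2 E2 by simp
qed

lemma naive_exists:
  assumes fin: "finite A" and CA: "C \<subseteq> A" and cf: "conflict_free R C"
  shows "\<exists>E. C \<subseteq> E \<and> naive_ext A R E"
proof -
  let ?M = "{T. C \<subseteq> T \<and> T \<subseteq> A \<and> conflict_free R T}"
  have "?M \<subseteq> Pow A" by blast
  then have "finite ?M" using fin by (simp add: finite_subset)
  moreover have "?M \<noteq> {}" using CA cf by blast
  ultimately have "\<exists>m\<in>?M. \<forall>b\<in>?M. m \<le> b \<longrightarrow> m = b" by (rule finite_has_maximal)
  then obtain m where m: "m \<in> ?M" "\<forall>b\<in>?M. m \<le> b \<longrightarrow> m = b" ..
  have "naive_ext A R m" unfolding naive_ext_def
  proof (intro conjI allI impI)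
    show "m \<subseteq> A" using m by blast
    show "conflict_free R m" using m by blast
    fix T assume "m \<subseteq> T \<and> T \<subseteq> A \<and> conflict_free R T"
    then have Tm: "T \<in> ?M" "m \<le> T" using m(1) by auto
    have "m = T" using m(2) Tm by (meson bspec mp)
    then show "T = m" by simp
  qed
  then show ?thesis using m by blast
qed

lemma initial_cls:
  assumes fin: "finite A" and wf: "R \<subseteq> A \<times> A" and ne: "A \<noteq> {}"
  shows "\<exists>a0\<in>A. \<forall>c\<in>A. \<forall>s\<in>cls A R a0. (c, s) \<in> R \<longrightarrow> c \<in> cls A R a0"
proof -
  define f where "f a = card {b\<in>A. (b, a) \<in> R\<^sup>*}" for a
  obtain x where "x \<in> A" using ne by blast
  then obtain a0 where a0: "a0 \<in> A" "\<forall>y. y \<in> A \<longrightarrow> f a0 \<le> f y"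
    using ex_has_least_nat[of "\<lambda>a. a \<in> A" x f] by blast
  have "c \<in> cls A R a0" if c: "c \<in> A" and s: "s \<in> cls A R a0" and cs: "(c, s) \<in> R" for c s
  proof (rule ccontr)
    assume nc: "c \<notin> cls A R a0"
    have sa: "(s, a0) \<in> R\<^sup>*" using s unfolding cls_def by blast
    have ca: "(c, a0) \<in> R\<^sup>*" using cs sa by (rule converse_rtrancl_into_rtrancl)
    have ac: "(a0, c) \<notin> R\<^sup>*" using nc ca c unfolding cls_def by blast
    have sub: "{b\<in>A. (b, c) \<in> R\<^sup>*} \<subset> {b\<in>A. (b, a0) \<in> R\<^sup>*}"
    proof
      show "{b\<in>A. (b, c) \<in> R\<^sup>*} \<subseteq> {b\<in>A. (b, a0) \<in> R\<^sup>*}"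
        using ca by (auto intro: rtrancl_trans)
      show "{b\<in>A. (b, c) \<in> R\<^sup>*} \<noteq> {b\<in>A. (b, a0) \<in> R\<^sup>*}"
        using ac a0(1) by blast
    qed
    have "f c < f a0" unfolding f_def
      by (rule psubset_card_mono[OF finite_subset[OF _ fin] sub]) blast
    then show False using a0(2) c by (meson not_le)
  qed
  then show ?thesis using a0(1) by blast
qed

lemma cls_ne_A:
  assumes wf: "R \<subseteq> A \<times> A" and fin: "finite A" and c: "card (SCCS A R) > 1" and a0: "a0 \<in> A"
  shows "cls A R a0 \<noteq> A"
proof
  assume h: "cls A R a0 = A"
  have "\<forall>S\<in>SCCS A R. S = A"
  proof
    fix S assume "S \<in> SCCS A R"
    then obtain a where a: "a \<in> A" "S = cls A R a" using SCCS_eq[OF wf] by blast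
    have "a \<in> cls A R a0" using a(1) h by simp
    then have "cls A R a = cls A R a0" by (rule cls_eq)
    then show "S = A" using a h by simp
  qed
  then have "SCCS A R \<subseteq> {A}" by blast
  then have "card (SCCS A R) \<le> card {A}" by (intro card_mono) simp_all
  then have "card (SCCS A R) \<le> 1" by simp
  then show False using c by simp
qed

lemma cf2_exists:
  "card A = n \<Longrightarrow> finite A \<Longrightarrow> R \<subseteq> A \<times> A \<Longrightarrow> \<exists>E. cf2_ext A R E"
proof (induction n arbitrary: A R rule: less_induct)
  case (less n)
  note fin = less.prems(2) and wf = less.prems(3)
  show ?case
  proof (cases "card (SCCS A R) \<le> 1")
    case True
    obtain E where "naive_ext A R E" using naive_exists[OF fin, of "{}" R]
      unfolding conflict_free_def by blast
    then show ?thesis using cf2_ext.base[OF True] by blast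
  next
    case False
    then have c: "card (SCCS A R) > 1" by simp
    have ne: "A \<noteq> {}"
    proof
      assume "A = {}"
      then have "SCCS A R = {}" using SCCS_eq[OF wf] by simp
      then show False using c by simp
    qed
    obtain a0 where a0: "a0 \<in> A" "\<forall>c\<in>A. \<forall>s\<in>cls A R a0. (c, s) \<in> R \<longrightarrow> c \<in> cls A R a0"
      using initial_cls[OF fin wf ne] by blast
    let ?U = "cls A R a0"
    have UA: "?U \<subseteq> A" by (rule cls_sub)
    have Une: "?U \<noteq> A" using cls_ne_A[OF wf fin c a0(1)] .
    have a0U: "a0 \<in> ?U" using a0(1) by (rule cls_self)
    have clU: "\<forall>a\<in>?U. cls A R a \<subseteq> ?U"
    proof
      fix a assume "a \<in> ?U"
      then have "cls A R a = ?U" by (rule cls_eq)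
      then show "cls A R a \<subseteq> ?U" by simp
    qed
    have "card ?U < card A" using UA Une fin by (intro psubset_card_mono) auto
    then have "card ?U < n" using less.prems(1) by simp
    then obtain E1 where E1: "cf2_ext ?U (restrict_att R ?U) E1"
      using less.IH[OF _ refl finite_subset[OF UA fin] restrict_wf] by blast
    have E1U: "E1 \<subseteq> ?U" using E1 by (rule cf2_sub)
    let ?W = "A - ?U - att R E1"
    have WA: "?W \<subseteq> A" by blast
    have "a0 \<notin> ?W" using a0U by simp
    then have "?W \<noteq> A" using a0(1) by metis
    then have "card ?W < card A" using WA fin by (intro psubset_card_mono) auto
    then have "card ?W < n" using less.prems(1) by simp
    then obtain E2 where E2: "cf2_ext ?W (restrict_att R ?W) E2"
      using less.IH[OF _ refl finite_subset[OF WA fin] restrict_wf] by blast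
    have E2W: "E2 \<subseteq> ?W" using E2 by (rule cf2_sub)
    have i1: "(E1 \<union> E2) \<inter> ?U = E1" using E1U E2W by blast
    have i2: "(E1 \<union> E2) - ?U = E2" using E1U E2W by blast
    have EA: "E1 \<union> E2 \<subseteq> A" using E1U E2W UA by blast
    have "cf2_ext A R (E1 \<union> E2)"
      using split_iff[OF fin wf EA UA a0(2) clU] E1 E2 unfolding i1 i2 by simp
    then show ?thesis by blast
  qed
qed

lemma cf2_naive: "cf2_ext A R E \<Longrightarrow> R \<subseteq> A \<times> A \<Longrightarrow> naive_ext A R E"
proof (induction rule: cf2_ext.induct)
  case (base A R E) then show ?case by simp
next
  case (step A R E)
  note wf = step.prems
  have IH: "naive_ext (cls A R a - Dd R (cls A R a) E) (restrict_att R (cls A R a - Dd R (cls A R a) E))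
      (E \<inter> cls A R a)" if "a \<in> A" for a
  proof -
    have "cls A R a \<in> SCCS A R" using SCCS_eq[OF wf] that by blast
    then show ?thesis using step.IH restrict_wf unfolding UP_eq[OF wf] by blast
  qed
  show ?case unfolding naive_ext_def
  proof (intro conjI allI impI)
    show "E \<subseteq> A" using step by simp
    show cfE: "conflict_free R E" unfolding conflict_free_def
    proof (intro ballI)
      fix e1 e2 assume e: "e1 \<in> E" "e2 \<in> E"
      show "(e1, e2) \<notin> R"
      proof
        assume r: "(e1, e2) \<in> R"
        have e2A: "e2 \<in> A" using e step(2) by blast
        let ?S = "cls A R e2"
        have e2S: "e2 \<in> ?S" using e2A by (rule cls_self)
        have n2: "naive_ext (?S - Dd R ?S E) (restrict_att R (?S - Dd R ?S E)) (E \<inter> ?S)"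
          using IH[OF e2A] .
        then have sub: "E \<inter> ?S \<subseteq> ?S - Dd R ?S E" unfolding naive_ext_def by blast
        show False
        proof (cases "e1 \<in> ?S")
          case True
          then have "(e1, e2) \<in> restrict_att R (?S - Dd R ?S E)"
            using sub e e2S r unfolding restrict_att_def by blast
          moreover have "e1 \<in> E \<inter> ?S" "e2 \<in> E \<inter> ?S" using True e e2S by auto
          ultimately show False using n2 unfolding naive_ext_def conflict_free_def by blast
        next
          case False
          then have "e2 \<in> Dd R ?S E" using e r e2S unfolding Dd_def by blast
          then show False using sub e e2S by blast
        qed
      qed
    qed
    fix T assume T: "E \<subseteq> T \<and> T \<subseteq> A \<and> conflict_free R T"
    show "T = E"
    proof (rule ccontr)
      assume "T \<noteq> E"
      then obtain t where t: "t \<in> T" "t \<notin> E" using T by blast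
      have tA: "t \<in> A" using t T by blast
      let ?S = "cls A R t"
      have tS: "t \<in> ?S" using tA by (rule cls_self)
      show False
      proof (cases "t \<in> Dd R ?S E")
        case True
        then obtain e where "e \<in> E" "(e, t) \<in> R" unfolding Dd_def by blast
        then show False using T t unfolding conflict_free_def by blast
      next
        case False
        have n2: "naive_ext (?S - Dd R ?S E) (restrict_att R (?S - Dd R ?S E)) (E \<inter> ?S)"
          using IH[OF tA] .
        let ?T = "insert t (E \<inter> ?S)"
        have "?T \<subseteq> ?S - Dd R ?S E" using n2 False tS unfolding naive_ext_def by blast
        moreover have "conflict_free (restrict_att R (?S - Dd R ?S E)) ?T"
          using T t unfolding conflict_free_def restrict_att_def by blast
        moreover have "E \<inter> ?S \<subseteq> ?T" by blast
        ultimately have "?T = E \<inter> ?S" using n2 unfolding naive_ext_def by blast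
        then show False using t by blast
      qed
    qed
  qed
qed


lemma ne_restrict:
  assumes ne: "normal_expansion A R A' R'" and YA: "Y \<subseteq> A" and YY: "Y \<subseteq> Y'"
  shows "normal_expansion Y (restrict_att R Y) Y' (restrict_att R' Y')"
  using ne YA YY unfolding normal_expansion_def restrict_att_def by blast

lemma cls_mono:
  assumes "A \<subseteq> A'" "R \<subseteq> R'"
  shows "cls A R a \<subseteq> cls A' R' a"
proof -
  have "R\<^sup>* \<subseteq> R'\<^sup>*" using assms(2) by (rule rtrancl_mono)
  then show ?thesis using assms(1) unfolding cls_def by blast
qed

lemma main:
  "card A' = n \<Longrightarrow> finite A' \<Longrightarrow> R \<subseteq> A \<times> A \<Longrightarrow> R' \<subseteq> A' \<times> A' \<Longrightarrow>
   normal_expansion A R A' R' \<Longrightarrow> cf2_ext A R E \<Longrightarrow>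
   \<exists>E'. cf2_ext A' R' E' \<and> (\<not> E' \<subseteq> A \<or> E' = E)"
proof (induction n arbitrary: A R A' R' E rule: less_induct)
  case (less n)
  note fin' = less.prems(2) and wf = less.prems(3) and wf' = less.prems(4)
    and ne = less.prems(5) and cfE = less.prems(6)
  have AA: "A \<subseteq> A'" using ne unfolding normal_expansion_def by blast
  have RR: "R \<subseteq> R'" using ne unfolding normal_expansion_def by blast
  have new: "(a, b) \<in> R" if "(a, b) \<in> R'" "a \<in> A" "b \<in> A" for a b
  proof (rule ccontr)
    assume "(a, b) \<notin> R"
    then have "(a, b) \<in> R' - R" using that by simp
    then show False using ne that(2,3) unfolding normal_expansion_def by blast
  qed
  have fin: "finite A" using fin' AA by (rule finite_subset[rotated])
  have EA: "E \<subseteq> A" using cfE by (rule cf2_sub)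
  show ?case
  proof (cases "card (SCCS A' R') \<le> 1")
    case True
    show ?thesis
    proof (cases "\<exists>x\<in>A' - A. (x, x) \<notin> R'")
      case True
      then obtain x where x: "x \<in> A' - A" "(x, x) \<notin> R'" by blast
      have xA: "{x} \<subseteq> A'" using x by blast
      have xc: "conflict_free R' {x}" using x unfolding conflict_free_def by blast
      obtain E' where E': "{x} \<subseteq> E'" "naive_ext A' R' E'"
        using naive_exists[OF fin' xA xc] by blast
      have "cf2_ext A' R' E'" using cf2_ext.base[OF \<open>card (SCCS A' R') \<le> 1\<close> E'(2)] .
      moreover have "\<not> E' \<subseteq> A" using E'(1) x by blast
      ultimately show ?thesis by blast
    next
      case False
      have nE: "naive_ext A R E" using cf2_naive[OF cfE wf] .
      have "naive_ext A' R' E" unfolding naive_ext_def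
      proof (intro conjI allI impI)
        show "E \<subseteq> A'" using EA AA by blast
        have cfR: "conflict_free R E" using nE unfolding naive_ext_def by blast
        show "conflict_free R' E" unfolding conflict_free_def
        proof (intro ballI)
          fix e1 e2 assume e: "e1 \<in> E" "e2 \<in> E"
          show "(e1, e2) \<notin> R'"
          proof
            assume "(e1, e2) \<in> R'"
            then have "(e1, e2) \<in> R" using new e EA by blast
            then show False using cfR e unfolding conflict_free_def by blast
          qed
        qed
        fix T assume T: "E \<subseteq> T \<and> T \<subseteq> A' \<and> conflict_free R' T"
        have TA: "T \<subseteq> A"
        proof
          fix t assume t: "t \<in> T"
          show "t \<in> A"
          proof (rule ccontr)
            assume "t \<notin> A"
            then have "(t, t) \<in> R'" using False t T by blast
            then show False using t T unfolding conflict_free_def by blast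
          qed
        qed
        have "conflict_free R T" using T RR unfolding conflict_free_def by blast
        moreover have mx: "\<forall>T. E \<subseteq> T \<and> T \<subseteq> A \<and> conflict_free R T \<longrightarrow> T = E"
          using nE unfolding naive_ext_def by blast
        ultimately show "T = E" using T TA by blast
      qed
      then show ?thesis using cf2_ext.base[OF True] by blast
    qed
  next
    case False
    then have c: "card (SCCS A' R') > 1" by simp
    have ne': "A' \<noteq> {}"
    proof
      assume "A' = {}"
      then have "SCCS A' R' = {}" using SCCS_eq[OF wf'] by simp
      then show False using c by simp
    qed
    obtain a0 where a0: "a0 \<in> A'" "\<forall>c\<in>A'. \<forall>s\<in>cls A' R' a0. (c, s) \<in> R' \<longrightarrow> c \<in> cls A' R' a0"
      using initial_cls[OF fin' wf' ne'] by blast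
    define U' where "U' = cls A' R' a0"
    define U where "U = U' \<inter> A"
    have U'A: "U' \<subseteq> A'" unfolding U'_def by (rule cls_sub)
    have Une: "U' \<noteq> A'" unfolding U'_def using cls_ne_A[OF wf' fin' c a0(1)] .
    have a0U: "a0 \<in> U'" unfolding U'_def using a0(1) by (rule cls_self)
    have unatt': "\<forall>c\<in>A'. \<forall>s\<in>U'. (c, s) \<in> R' \<longrightarrow> c \<in> U'" using a0(2) unfolding U'_def .
    have clU': "\<forall>a\<in>U'. cls A' R' a \<subseteq> U'"
    proof
      fix a assume "a \<in> U'"
      then have "cls A' R' a = U'" unfolding U'_def by (rule cls_eq)
      then show "cls A' R' a \<subseteq> U'" by simp
    qed
    have UA: "U \<subseteq> A" unfolding U_def by blast
    have UU: "U \<subseteq> U'" unfolding U_def by blast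
    have unatt: "\<forall>c\<in>A. \<forall>s\<in>U. (c, s) \<in> R \<longrightarrow> c \<in> U"
    proof (intro ballI impI)
      fix c s assume cs: "c \<in> A" "s \<in> U" "(c, s) \<in> R"
      then have "c \<in> U'" using unatt' AA RR UU by blast
      then show "c \<in> U" using cs(1) unfolding U_def by blast
    qed
    have clU: "\<forall>a\<in>U. cls A R a \<subseteq> U"
    proof (intro ballI subsetI)
      fix a b assume a: "a \<in> U" and b: "b \<in> cls A R a"
      have "b \<in> cls A' R' a" using cls_mono[OF AA RR] b by blast
      moreover have "cls A' R' a \<subseteq> U'" using clU' a UU by blast
      moreover have "b \<in> A" using cls_sub[of A R a] b by (rule subsetD)
      ultimately show "b \<in> U" unfolding U_def by blast
    qed
    define W where "W = A - U - att R (E \<inter> U)"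
    have spl: "cf2_ext U (restrict_att R U) (E \<inter> U) \<and> cf2_ext W (restrict_att R W) (E - U)"
      using split_iff[OF fin wf EA UA unatt clU] cfE unfolding W_def by blast
    have "card U' < card A'" using U'A Une fin' by (intro psubset_card_mono) auto
    then have lt1: "card U' < n" using less.prems(1) by simp
    obtain E1 where E1: "cf2_ext U' (restrict_att R' U') E1" "\<not> E1 \<subseteq> U \<or> E1 = E \<inter> U"
      using less.IH[OF lt1 refl finite_subset[OF U'A fin'] restrict_wf restrict_wf
          ne_restrict[OF ne UA UU]] spl by blast
    have E1U: "E1 \<subseteq> U'" using E1(1) by (rule cf2_sub)
    show ?thesis
    proof (cases "E1 \<subseteq> U")
      case False
      let ?W = "A' - U' - att R' E1"
      have WA: "?W \<subseteq> A'" by blast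
      obtain E2 where E2: "cf2_ext ?W (restrict_att R' ?W) E2"
        using cf2_exists[OF refl finite_subset[OF WA fin'] restrict_wf] by blast
      have E2W: "E2 \<subseteq> ?W" using E2 by (rule cf2_sub)
      have i1: "(E1 \<union> E2) \<inter> U' = E1" using E1U E2W by blast
      have i2: "(E1 \<union> E2) - U' = E2" using E1U E2W by blast
      have EA': "E1 \<union> E2 \<subseteq> A'" using E1U E2W U'A by blast
      have "cf2_ext A' R' (E1 \<union> E2)"
        using split_iff[OF fin' wf' EA' U'A unatt' clU'] E1(1) E2 unfolding i1 i2 by simp
      moreover have "\<not> E1 \<union> E2 \<subseteq> A" using False E1U unfolding U_def by blast
      ultimately show ?thesis by blast
    next
      case True
      then have E1eq: "E1 = E \<inter> U" using E1(2) by blast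
      define W' where "W' = A' - U' - att R' (E \<inter> U)"
      have WA: "W \<subseteq> A" unfolding W_def by blast
      have WW: "W \<subseteq> W'"
      proof
        fix y assume y: "y \<in> W"
        have yA: "y \<in> A" using y unfolding W_def by blast
        have yU: "y \<notin> U'" using y yA unfolding W_def U_def by blast
        have "y \<notin> att R' (E \<inter> U)"
        proof
          assume "y \<in> att R' (E \<inter> U)"
          then obtain e where e: "e \<in> E \<inter> U" "(e, y) \<in> R'" unfolding att_def by blast
          then have "(e, y) \<in> R" using new EA yA by blast
          then have "y \<in> att R (E \<inter> U)" using e unfolding att_def by blast
          then show False using y unfolding W_def by blast
        qed
        then show "y \<in> W'" using yA AA yU unfolding W'_def by blast
      qed
      have WA': "W' \<inter> A \<subseteq> W"
      proof
        fix y assume y: "y \<in> W' \<inter> A"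
        have "y \<notin> att R (E \<inter> U)" using y RR unfolding W'_def att_def by blast
        then show "y \<in> W" using y unfolding W'_def W_def U_def by blast
      qed
      have W'A: "W' \<subseteq> A'" unfolding W'_def by blast
      have "a0 \<notin> W'" using a0U unfolding W'_def by simp
      then have "W' \<noteq> A'" using a0(1) by metis
      then have "card W' < card A'" using W'A fin' by (intro psubset_card_mono) auto
      then have lt2: "card W' < n" using less.prems(1) by simp
      obtain E2 where E2: "cf2_ext W' (restrict_att R' W') E2" "\<not> E2 \<subseteq> W \<or> E2 = E - U"
        using less.IH[OF lt2 refl finite_subset[OF W'A fin'] restrict_wf restrict_wf
          ne_restrict[OF ne WA WW]] spl by blast
      have E2W: "E2 \<subseteq> W'" using E2(1) by (rule cf2_sub)
      have E2U: "E2 \<inter> U' = {}" using E2W unfolding W'_def by blast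
      have i1: "((E \<inter> U) \<union> E2) \<inter> U' = E \<inter> U" using E2U UU by blast
      have i2: "((E \<inter> U) \<union> E2) - U' = E2" using E2U UU by blast
      have EA': "(E \<inter> U) \<union> E2 \<subseteq> A'" using E2W W'A EA AA by blast
      have "cf2_ext A' R' ((E \<inter> U) \<union> E2)"
        using split_iff[OF fin' wf' EA' U'A unatt' clU'] E1(1) E2(1) unfolding i1 i2 E1eq W'_def
        by simp
      moreover have "\<not> (E \<inter> U) \<union> E2 \<subseteq> A \<or> (E \<inter> U) \<union> E2 = E"
      proof (cases "E2 \<subseteq> W")
        case True
        then have "E2 = E - U" using E2(2) by blast
        then show ?thesis by blast
      next
        case False
        then obtain y where "y \<in> E2" "y \<notin> W" by blast
        then have "y \<notin> A" using WA' E2W by blast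
        then show ?thesis using \<open>y \<in> E2\<close> by blast
      qed
      ultimately show ?thesis by blast
    qed
  qed
qed

theorem proposition40:
  fixes AR AR' :: "'a set" and Att Att' :: "('a \<times> 'a) set"
  assumes "is_AF AR Att" and "is_AF AR' Att'"
    and "normal_expansion AR Att AR' Att'"
  shows "\<forall>E. cf2_ext AR Att E \<longrightarrow>
           (\<exists>E'. cf2_ext AR' Att' E' \<and> (\<not> E' \<subseteq> AR \<or> E' = E))"
  using main[OF refl, of AR' Att AR Att'] assms unfolding is_AF_def by blast

end
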